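(* Let $(Q,\cdot)$ be a finite Ward quasigroup of order $n$ with $xx=e$ for all $x$. If $(Q,\cdot)$ is $k$-translatable (with respect to some ordering of $Q$ as $1,\ldots,n$), where $1\le k<n$, then $k=1$, and $(Q,\cdot)$ is induced by a cyclic group, i.e. the group $(Q,\circ)$ with $x\circ y=x\cdot(e\cdot y)$ is cyclic.
   Context: A Ward quasigroup is a quasigroup (a magma in which $ax=b$, $ya=b$ have unique solutions) satisfying $(xz)(yz)=xy$ for all $x,y,z$; it has an element $e$ with $xx=e$ for all $x$, and $x\circ y=x(ey)$ defines a group with identity $e$ from which $(Q,\cdot)$ is recovered by $xy=x\circ y^{-1}$. With $Q=\{1,\ldots,n\}$ and $[i]_n$ denoting $i$ modulo $n$ (with $0$ identified with $n$), a magma is $k$-translatable ($1\le k<n$) if $i\cdot j=[i+1]_n\cdot[j+k]_n$ for all $i,j\in Q$. *)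

theory Defs
  imports "HOL-Algebra.Generated_Groups"
begin

definition quasigroup_on :: "'a set \<Rightarrow> ('a \<Rightarrow> 'a \<Rightarrow> 'a) \<Rightarrow> bool" where
  "quasigroup_on Q m \<longleftrightarrow>
     (\<forall>x\<in>Q. \<forall>y\<in>Q. m x y \<in> Q) \<and>
     (\<forall>a\<in>Q. \<forall>b\<in>Q. \<exists>!x. x \<in> Q \<and> m a x = b) \<and>
     (\<forall>a\<in>Q. \<forall>b\<in>Q. \<exists>!y. y \<in> Q \<and> m y a = b)"

definition ward_quasigroup :: "'a set \<Rightarrow> ('a \<Rightarrow> 'a \<Rightarrow> 'a) \<Rightarrow> bool" where
  "ward_quasigroup Q m \<longleftrightarrow> quasigroup_on Q m \<and>
     (\<forall>x\<in>Q. \<forall>y\<in>Q. \<forall>z\<in>Q. m (m x z) (m y z) = m x y)"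

definition modn :: "nat \<Rightarrow> nat \<Rightarrow> nat" where
  "modn n i = (if i mod n = 0 then n else i mod n)"

text \<open>k-translatable with respect to the ordering \<sigma> : {1..n} \<rightarrow> Q (the i-th element is \<sigma> i).\<close>
definition translatable :: "nat \<Rightarrow> (nat \<Rightarrow> 'a) \<Rightarrow> ('a \<Rightarrow> 'a \<Rightarrow> 'a) \<Rightarrow> nat \<Rightarrow> bool" where
  "translatable n \<sigma> m k \<longleftrightarrow> 1 \<le> k \<and> k < n \<and>
     (\<forall>i\<in>{1..n}. \<forall>j\<in>{1..n}.
        m (\<sigma> i) (\<sigma> j) = m (\<sigma> (modn n (i + 1))) (\<sigma> (modn n (j + k))))"

definition ward_group :: "'a set \<Rightarrow> ('a \<Rightarrow> 'a \<Rightarrow> 'a) \<Rightarrow> 'a \<Rightarrow> 'a monoid" where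
  "ward_group Q m e = \<lparr>carrier = Q, mult = (\<lambda>x y. m x (m e y)), one = e\<rparr>"

end

theory Submission
  imports Defs
begin

lemma ward_basic:
  assumes W: "ward_quasigroup Q m" and eQ: "e \<in> Q" and sq: "\<forall>x\<in>Q. m x x = e"
  shows "\<And>x y. x \<in> Q \<Longrightarrow> y \<in> Q \<Longrightarrow> m x y \<in> Q"
    and "\<And>w. w \<in> Q \<Longrightarrow> m w e = w"
    and "\<And>y z. y \<in> Q \<Longrightarrow> z \<in> Q \<Longrightarrow> m e (m y z) = m z y"
    and "\<And>z. z \<in> Q \<Longrightarrow> m e (m e z) = z"
    and "\<And>x y z. x \<in> Q \<Longrightarrow> y \<in> Q \<Longrightarrow> z \<in> Q \<Longrightarrow> m (m x z) (m y z) = m x y"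
proof -
  have Q1: "\<forall>x\<in>Q. \<forall>y\<in>Q. m x y \<in> Q"
    using W unfolding ward_quasigroup_def quasigroup_on_def by (elim conjE) assumption
  have Q3: "\<forall>a\<in>Q. \<forall>b\<in>Q. \<exists>!y. y \<in> Q \<and> m y a = b"
    using W unfolding ward_quasigroup_def quasigroup_on_def by (elim conjE) assumption
  have Q4: "\<forall>x\<in>Q. \<forall>y\<in>Q. \<forall>z\<in>Q. m (m x z) (m y z) = m x y"
    using W unfolding ward_quasigroup_def by (elim conjE) assumption
  have cl: "\<And>x y. x \<in> Q \<Longrightarrow> y \<in> Q \<Longrightarrow> m x y \<in> Q"
    using Q1 by blast
  have wd: "\<And>x y z. x \<in> Q \<Longrightarrow> y \<in> Q \<Longrightarrow> z \<in> Q \<Longrightarrow> m (m x z) (m y z) = m x y"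
    using Q4 by blast
  have rs: "\<And>a b. a \<in> Q \<Longrightarrow> b \<in> Q \<Longrightarrow> \<exists>y. y \<in> Q \<and> m y a = b"
  proof -
    fix a b assume a: "a \<in> Q" and b: "b \<in> Q"
    have "\<exists>!y. y \<in> Q \<and> m y a = b" using Q3 a b by blast
    then show "\<exists>y. y \<in> Q \<and> m y a = b" by (rule ex1_implies_ex)
  qed
  have re: "\<And>w. w \<in> Q \<Longrightarrow> m w e = w"
  proof -
    fix w assume w: "w \<in> Q"
    obtain x where x: "x \<in> Q" "m x e = w" using rs[OF eQ w] by blast
    have "m (m x e) (m e e) = m x e" using wd[OF x(1) eQ eQ] .
    then show "m w e = w" using x sq eQ by simp
  qed
  have l2: "\<And>y z. y \<in> Q \<Longrightarrow> z \<in> Q \<Longrightarrow> m e (m y z) = m z y"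
  proof -
    fix y z assume y: "y \<in> Q" and z: "z \<in> Q"
    show "m e (m y z) = m z y" using wd[OF z y z] sq z by simp
  qed
  show "\<And>x y. x \<in> Q \<Longrightarrow> y \<in> Q \<Longrightarrow> m x y \<in> Q" by (rule cl)
  show "\<And>w. w \<in> Q \<Longrightarrow> m w e = w" by (rule re)
  show "\<And>y z. y \<in> Q \<Longrightarrow> z \<in> Q \<Longrightarrow> m e (m y z) = m z y" by (rule l2)
  show "\<And>z. z \<in> Q \<Longrightarrow> m e (m e z) = z"
  proof -
    fix z assume z: "z \<in> Q"
    show "m e (m e z) = z" using l2[OF eQ z] re[OF z] by simp
  qed
  show "\<And>x y z. x \<in> Q \<Longrightarrow> y \<in> Q \<Longrightarrow> z \<in> Q \<Longrightarrow> m (m x z) (m y z) = m x y" by (rule wd)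
qed

lemma ward_group_group:
  assumes W: "ward_quasigroup Q m" and eQ: "e \<in> Q" and sq: "\<forall>x\<in>Q. m x x = e"
  shows "group (ward_group Q m e)"
proof (rule groupI)
  note B = ward_basic[OF W eQ sq]
  show "\<And>x y. x \<in> carrier (ward_group Q m e) \<Longrightarrow> y \<in> carrier (ward_group Q m e) \<Longrightarrow>
     x \<otimes>\<^bsub>ward_group Q m e\<^esub> y \<in> carrier (ward_group Q m e)"
    using B(1) eQ by (simp add: ward_group_def)
  show "\<one>\<^bsub>ward_group Q m e\<^esub> \<in> carrier (ward_group Q m e)" using eQ by (simp add: ward_group_def)
  show "\<And>x. x \<in> carrier (ward_group Q m e) \<Longrightarrow> \<one>\<^bsub>ward_group Q m e\<^esub> \<otimes>\<^bsub>ward_group Q m e\<^esub> x = x"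
    using B(4) by (simp add: ward_group_def)
  show "\<And>x. x \<in> carrier (ward_group Q m e) \<Longrightarrow>
      \<exists>y\<in>carrier (ward_group Q m e). y \<otimes>\<^bsub>ward_group Q m e\<^esub> x = \<one>\<^bsub>ward_group Q m e\<^esub>"
  proof -
    fix x assume "x \<in> carrier (ward_group Q m e)"
    then have x: "x \<in> Q" by (simp add: ward_group_def)
    show "\<exists>y\<in>carrier (ward_group Q m e). y \<otimes>\<^bsub>ward_group Q m e\<^esub> x = \<one>\<^bsub>ward_group Q m e\<^esub>"
      using x eQ B(1) sq by (intro bexI[of _ "m e x"]) (auto simp: ward_group_def)
  qed
  show "\<And>x y z. x \<in> carrier (ward_group Q m e) \<Longrightarrow> y \<in> carrier (ward_group Q m e) \<Longrightarrow>
      z \<in> carrier (ward_group Q m e) \<Longrightarrow>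
      x \<otimes>\<^bsub>ward_group Q m e\<^esub> y \<otimes>\<^bsub>ward_group Q m e\<^esub> z =
      x \<otimes>\<^bsub>ward_group Q m e\<^esub> (y \<otimes>\<^bsub>ward_group Q m e\<^esub> z)"
  proof -
    fix x y z assume "x \<in> carrier (ward_group Q m e)" "y \<in> carrier (ward_group Q m e)"
      "z \<in> carrier (ward_group Q m e)"
    then have x: "x \<in> Q" and y: "y \<in> Q" and z: "z \<in> Q" by (simp_all add: ward_group_def)
    have ez: "m e z \<in> Q" "m e y \<in> Q" using B(1) eQ y z by auto
    have "m (m x (m e y)) (m (m (m e z) y) (m e y)) = m x (m (m e z) y)"
      using B(5)[OF x B(1)[OF ez(1) y] ez(2)] .
    moreover have "m (m (m e z) y) (m e y) = m e z"
      using B(5)[OF ez(1) eQ y] B(2)[OF ez(1)] by simp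
    moreover have "m e (m y (m e z)) = m (m e z) y" using B(3)[OF y ez(1)] .
    ultimately show "x \<otimes>\<^bsub>ward_group Q m e\<^esub> y \<otimes>\<^bsub>ward_group Q m e\<^esub> z =
      x \<otimes>\<^bsub>ward_group Q m e\<^esub> (y \<otimes>\<^bsub>ward_group Q m e\<^esub> z)"
      by (simp add: ward_group_def)
  qed
qed

lemma ward_m_eq:
  assumes W: "ward_quasigroup Q m" and eQ: "e \<in> Q" and sq: "\<forall>x\<in>Q. m x x = e"
    and x: "x \<in> Q" and y: "y \<in> Q"
  shows "m x y = x \<otimes>\<^bsub>ward_group Q m e\<^esub> inv\<^bsub>ward_group Q m e\<^esub> y"
proof -
  interpret G: group "ward_group Q m e" by (rule ward_group_group[OF W eQ sq])
  note B = ward_basic[OF W eQ sq]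
  have "inv\<^bsub>ward_group Q m e\<^esub> y = m e y"
    using y eQ B(1) sq by (intro G.inv_equality) (auto simp: ward_group_def)
  then show ?thesis using B(4)[OF y] by (simp add: ward_group_def)
qed

lemma modn_range: "0 < n \<Longrightarrow> modn n i \<in> {1..n}"
  unfolding modn_def by auto

lemma modn_mod: "0 < n \<Longrightarrow> modn n i mod n = i mod n"
  unfolding modn_def by auto

lemma modn_step: "0 < n \<Longrightarrow> modn n (modn n i + 1) = modn n (i + 1)"
  unfolding modn_def by (simp add: mod_Suc_eq Suc_eq_plus1[symmetric] mod_Suc)

lemma modn_id: "i \<in> {1..n} \<Longrightarrow> modn n i = i"
  unfolding modn_def by (cases "i = n") auto

theorem theorem4p16:
  fixes Q :: "'a set" and m :: "'a \<Rightarrow> 'a \<Rightarrow> 'a" and e :: 'a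
    and n k :: nat and \<sigma> :: "nat \<Rightarrow> 'a"
  assumes "finite Q" and "card Q = n"
    and "ward_quasigroup Q m"
    and "e \<in> Q" and "\<forall>x\<in>Q. m x x = e"
    and "bij_betw \<sigma> {1..n} Q"
    and "1 \<le> k" and "k < n"
    and "translatable n \<sigma> m k"
  shows "k = 1 \<and> group (ward_group Q m e) \<and>
         (\<exists>g\<in>Q. carrier (ward_group Q m e) = generate (ward_group Q m e) {g})"
proof -
  note W = assms(3) and eQ = assms(4) and sq = assms(5) and bij = assms(6)
  define G where "G = ward_group Q m e"
  interpret G: group G unfolding G_def by (rule ward_group_group[OF W eQ sq])
  have carr: "carrier G = Q" by (simp add: G_def ward_group_def)
  have n0: "0 < n" "2 \<le> n" using assms(7,8) by auto
  have sQ: "\<And>i. i \<in> {1..n} \<Longrightarrow> \<sigma> i \<in> Q" using bij bij_betwE by blast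
  have sQ': "\<And>i. \<sigma> (modn n i) \<in> Q" using sQ modn_range[OF n0(1)] by blast
  have tr: "\<And>i j. i \<in> {1..n} \<Longrightarrow> j \<in> {1..n} \<Longrightarrow>
     m (\<sigma> i) (\<sigma> j) = m (\<sigma> (modn n (i + 1))) (\<sigma> (modn n (j + k)))"
    using assms(9) unfolding translatable_def by blast
  have mm: "\<And>x y. x \<in> Q \<Longrightarrow> y \<in> Q \<Longrightarrow> m x y = x \<otimes>\<^bsub>G\<^esub> inv\<^bsub>G\<^esub> y"
    unfolding G_def by (rule ward_m_eq[OF W eQ sq])
  have one1: "(1::nat) \<in> {1..n}" using n0 by auto
  define d where "d = inv\<^bsub>G\<^esub> (\<sigma> 1) \<otimes>\<^bsub>G\<^esub> \<sigma> (modn n (1 + k))"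
  have s1C: "\<sigma> 1 \<in> carrier G" using sQ[OF one1] carr by simp
  have sC': "\<And>i. \<sigma> (modn n i) \<in> carrier G" using sQ' carr by simp
  have dC: "d \<in> carrier G" unfolding d_def using s1C sC' by simp
  have alg: "\<And>a b a' b'. a \<in> carrier G \<Longrightarrow> b \<in> carrier G \<Longrightarrow> a' \<in> carrier G \<Longrightarrow> b' \<in> carrier G \<Longrightarrow>
     a \<otimes>\<^bsub>G\<^esub> inv\<^bsub>G\<^esub> b = a' \<otimes>\<^bsub>G\<^esub> inv\<^bsub>G\<^esub> b' \<Longrightarrow>
     a' = a \<otimes>\<^bsub>G\<^esub> (inv\<^bsub>G\<^esub> b \<otimes>\<^bsub>G\<^esub> b')"
  proof -
    fix a b a' b' assume c: "a \<in> carrier G" "b \<in> carrier G" "a' \<in> carrier G" "b' \<in> carrier G"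
      and h: "a \<otimes>\<^bsub>G\<^esub> inv\<^bsub>G\<^esub> b = a' \<otimes>\<^bsub>G\<^esub> inv\<^bsub>G\<^esub> b'"
    have "a' = (a' \<otimes>\<^bsub>G\<^esub> inv\<^bsub>G\<^esub> b') \<otimes>\<^bsub>G\<^esub> b'" using c by (simp add: G.m_assoc)
    also have "\<dots> = (a \<otimes>\<^bsub>G\<^esub> inv\<^bsub>G\<^esub> b) \<otimes>\<^bsub>G\<^esub> b'" using h by simp
    also have "\<dots> = a \<otimes>\<^bsub>G\<^esub> (inv\<^bsub>G\<^esub> b \<otimes>\<^bsub>G\<^esub> b')" using c by (simp add: G.m_assoc)
    finally show "a' = a \<otimes>\<^bsub>G\<^esub> (inv\<^bsub>G\<^esub> b \<otimes>\<^bsub>G\<^esub> b')" .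
  qed
  have step: "\<And>i. i \<in> {1..n} \<Longrightarrow> \<sigma> (modn n (i + 1)) = \<sigma> i \<otimes>\<^bsub>G\<^esub> d"
  proof -
    fix i assume i: "i \<in> {1..n}"
    have "m (\<sigma> i) (\<sigma> 1) = m (\<sigma> (modn n (i + 1))) (\<sigma> (modn n (1 + k)))" using tr[OF i one1] .
    then have "\<sigma> i \<otimes>\<^bsub>G\<^esub> inv\<^bsub>G\<^esub> \<sigma> 1 = \<sigma> (modn n (i + 1)) \<otimes>\<^bsub>G\<^esub> inv\<^bsub>G\<^esub> \<sigma> (modn n (1 + k))"
      using mm sQ i one1 sQ' by simp
    then show "\<sigma> (modn n (i + 1)) = \<sigma> i \<otimes>\<^bsub>G\<^esub> d"
      unfolding d_def using alg sQ i one1 sQ' carr by simp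
  qed
  have X: "\<And>t. \<sigma> (modn n (1 + t)) = \<sigma> 1 \<otimes>\<^bsub>G\<^esub> d [^]\<^bsub>G\<^esub> t"
  proof -
    fix t show "\<sigma> (modn n (1 + t)) = \<sigma> 1 \<otimes>\<^bsub>G\<^esub> d [^]\<^bsub>G\<^esub> t"
    proof (induction t)
      case 0
      then show ?case using modn_id[OF one1] sQ[OF one1] carr by simp
    next
      case (Suc t)
      have "\<sigma> (modn n (1 + Suc t)) = \<sigma> (modn n (modn n (1 + t) + 1))"
        using modn_step[OF n0(1), of "1 + t"] by simp
      also have "\<dots> = \<sigma> (modn n (1 + t)) \<otimes>\<^bsub>G\<^esub> d"
        using step modn_range[OF n0(1)] by blast
      also have "\<dots> = \<sigma> 1 \<otimes>\<^bsub>G\<^esub> d [^]\<^bsub>G\<^esub> Suc t"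
        using Suc s1C dC by (simp add: G.m_assoc G.nat_pow_Suc)
      finally show ?case .
    qed
  qed
  have "\<sigma> 1 \<otimes>\<^bsub>G\<^esub> d [^]\<^bsub>G\<^esub> k = \<sigma> 1 \<otimes>\<^bsub>G\<^esub> d"
  proof -
    have "\<sigma> 1 \<otimes>\<^bsub>G\<^esub> d = \<sigma> (modn n (1 + k))"
      unfolding d_def using s1C sC' by (simp add: G.m_assoc[symmetric])
    then show ?thesis using X[of k] by simp
  qed
  then have dk: "d [^]\<^bsub>G\<^esub> k = d" using s1C dC by simp
  have sk: "Suc (k - 1) = k" using assms(7) by simp
  have "d [^]\<^bsub>G\<^esub> (k - 1) \<otimes>\<^bsub>G\<^esub> d = d"
    using dk G.nat_pow_Suc[of d "k - 1", unfolded sk] by simp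
  then have "d [^]\<^bsub>G\<^esub> (k - 1) = \<one>\<^bsub>G\<^esub>" using dC G.r_cancel_one[of d "d [^]\<^bsub>G\<^esub> (k - 1)"] by simp
  then have seq: "\<sigma> (modn n (1 + (k - 1))) = \<sigma> (modn n (1 + 0))" using X[of "k-1"] X[of 0] s1C by simp
  have inj: "inj_on \<sigma> {1..n}" using bij bij_betw_def by blast
  then have "modn n (1 + (k - 1)) = modn n (1 + 0)"
    using inj_onD[OF inj seq modn_range[OF n0(1)] modn_range[OF n0(1)]] by blast
  moreover have "1 + (k - 1) = k" using assms(7) by simp
  ultimately have "modn n k = modn n 1" by simp
  then have "k mod n = 1 mod n" by (metis modn_mod[OF n0(1)])
  then have k1: "k = 1" using assms(8) n0 by simp
  have cyc: "carrier G = generate G {d}"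
  proof
    show "generate G {d} \<subseteq> carrier G" using G.generate_incl dC by blast
    have pw: "\<And>t::nat. d [^]\<^bsub>G\<^esub> t \<in> generate G {d}"
    proof -
      fix t :: nat show "d [^]\<^bsub>G\<^esub> t \<in> generate G {d}"
        by (induction t) (auto simp: G.nat_pow_Suc intro: generate.one generate.eng generate.incl)
    qed
    have "e \<in> \<sigma> ` {1..n}" using bij eQ bij_betw_imp_surj_on by blast
    then obtain j0 where j0: "j0 \<in> {1..n}" "\<sigma> j0 = e" by (metis imageE)
    have oneG: "\<one>\<^bsub>G\<^esub> = e" by (simp add: G_def ward_group_def)
    have "modn n (1 + (j0 - 1)) = j0" using j0 modn_id by simp
    then have "\<sigma> 1 \<otimes>\<^bsub>G\<^esub> d [^]\<^bsub>G\<^esub> (j0 - 1) = \<sigma> j0" using X[of "j0 - 1"] by simp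
    then have "\<sigma> 1 \<otimes>\<^bsub>G\<^esub> d [^]\<^bsub>G\<^esub> (j0 - 1) = \<one>\<^bsub>G\<^esub>" using j0(2) oneG by simp
    then have "inv\<^bsub>G\<^esub> (d [^]\<^bsub>G\<^esub> (j0 - 1)) = \<sigma> 1" using s1C dC by (intro G.inv_equality) simp_all
    then have s1: "\<sigma> 1 = inv\<^bsub>G\<^esub> (d [^]\<^bsub>G\<^esub> (j0 - 1))" by simp
    have s1g: "\<sigma> 1 \<in> generate G {d}" unfolding s1
      using G.generate_m_inv_closed[of "{d}"] dC pw by blast
    show "carrier G \<subseteq> generate G {d}"
    proof
      fix q assume "q \<in> carrier G"
      then have "q \<in> \<sigma> ` {1..n}" using bij carr bij_betw_imp_surj_on by blast
      then obtain i where i: "i \<in> {1..n}" "q = \<sigma> i" by (metis imageE)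
      have "q = \<sigma> (modn n (1 + (i - 1)))" using i modn_id by simp
      then have "q = \<sigma> 1 \<otimes>\<^bsub>G\<^esub> d [^]\<^bsub>G\<^esub> (i - 1)" using X by simp
      then show "q \<in> generate G {d}" using generate.eng[OF s1g pw[of "i - 1"]] by simp
    qed
  qed
  have "\<exists>g\<in>Q. carrier G = generate G {g}" using cyc dC carr by blast
  then show ?thesis using k1 G.is_group unfolding G_def by blast
qed

end
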